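(* Let $m_1,\dots,m_k$ be natural numbers with greatest common divisor $q$, and let $\chi_1,\dots,\chi_k\in\mathbb{Z}_2$. Suppose that either (1) there exist $i,j\in\{1,\dots,k\}$ with $m_i$ even, $\chi_i\neq0$ and $m_j$ odd; or (2) there exist $i,j\in\{1,\dots,k\}$ with $m_i$ odd, $\chi_i=0$ and $\chi_j\neq0$. Then there exists $N\in\mathbb{N}$ such that for every $n\ge N$ and every $\chi\in\mathbb{Z}_2$ there are $l_1,\dots,l_k\in\mathbb{N}$ with \[ l_1m_1+\dots+l_km_k=nq\quad\text{and}\quad l_1\chi_1+\dots+l_k\chi_k=\chi. \]
   Context: $\mathbb{N}=\{1,2,\dots\}$; $\mathbb{Z}_2=\mathbb{Z}/2\mathbb{Z}$, and $l\chi$ for $l\in\mathbb{N}$, $\chi\in\mathbb{Z}_2$ is the usual integer multiple in $\mathbb{Z}_2$. *)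

theory Defs
  imports Main "HOL-Library.Z2"
begin

end

theory Submission
  imports Defs
begin
lemma bit_of_nat: "(of_nat n :: bit) = (if even n then 0 else 1)"
  by (induction n) auto

lemma gcd_lincomb:
  fixes m :: "nat \<Rightarrow> nat"
  assumes "finite A"
  shows "\<exists>c::nat \<Rightarrow> int. int (Gcd (m ` A)) = (\<Sum>i\<in>A. c i * int (m i))"
  using assms
proof (induction A rule: finite_induct)
  case empty then show ?case by simp
next
  case (insert a A)
  then obtain c where c: "int (Gcd (m ` A)) = (\<Sum>i\<in>A. c i * int (m i))" by blast
  obtain u v where uv: "u * int (m a) + v * int (Gcd (m ` A)) = gcd (int (m a)) (int (Gcd (m ` A)))"
    using bezout_int by blast
  define c' where "c' = (\<lambda>i. if i = a then u else v * c i)"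
  have "(\<Sum>i\<in>insert a A. c' i * int (m i)) = u * int (m a) + (\<Sum>i\<in>A. v * (c i * int (m i)))"
    using insert by (auto simp: c'_def intro!: sum.cong)
  also have "\<dots> = u * int (m a) + v * int (Gcd (m ` A))" by (simp add: c sum_distrib_left)
  also have "\<dots> = int (Gcd (m ` insert a A))" using uv by (simp add: gcd_int_int_eq)
  finally show ?case by metis
qed

lemma core:
  fixes m :: "nat \<Rightarrow> nat"
  assumes A: "finite A" and e: "e \<in> A" "m e \<ge> 1"
  shows "\<exists>N0. \<forall>n\<ge>N0. \<exists>g::nat\<Rightarrow>nat. (\<Sum>i\<in>A. g i * m i) = n * Gcd (m ` A)"
proof -
  define q where "q = Gcd (m ` A)"
  obtain c where c: "int q = (\<Sum>i\<in>A. c i * int (m i))"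
    using gcd_lincomb[OF A, of m] q_def by blast
  define pos where "pos i = nat (c i)" for i
  define neg where "neg i = nat (- c i)" for i
  define P where "P = (\<Sum>i\<in>A. pos i * m i)"
  define Q where "Q = (\<Sum>i\<in>A. neg i * m i)"
  have ci: "c i = int (pos i) - int (neg i)" for i by (simp add: pos_def neg_def)
  have "int q = (\<Sum>i\<in>A. int (pos i * m i)) - (\<Sum>i\<in>A. int (neg i * m i))"
    unfolding c ci by (simp add: sum_subtractf left_diff_distrib)
  then have "int q = int P - int Q" unfolding P_def Q_def by simp
  then have PQ: "P = Q + q" by linarith
  have qd: "q dvd m i" if "i \<in> A" for i unfolding q_def using that by simp
  have qpos: "q > 0" using qd[OF e(1)] e(2) by (metis dvd_0_left_iff gr0I not_one_le_zero)
  have "q dvd Q" unfolding Q_def by (intro dvd_sum) (simp add: qd)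
  then obtain u where u: "Q = q * u" by blast
  obtain t where t: "m e = q * t" using qd[OF e(1)] by blast
  have t1: "t \<ge> 1" using t e(2) by (cases t) auto
  define N0 where "N0 = (t - 1) * u"
  show ?thesis unfolding q_def[symmetric]
  proof (intro exI allI impI)
    fix n assume n: "n \<ge> N0"
    define r where "r = (n - N0) mod t"
    define s where "s = (n - N0) div t"
    have rt: "r \<le> t - 1" using t1 unfolding r_def
      by (metis One_nat_def Suc_pred le_simps(2) less_le_trans mod_less_divisor zero_less_one)
    define g where "g i = (t - 1 - r) * neg i + r * pos i + (if i = e then s else 0)" for i
    have "(\<Sum>i\<in>A. g i * m i) = (t - 1 - r) * Q + r * P + s * m e"
    proof -
      have "g i * m i = (t - 1 - r) * (neg i * m i) + r * (pos i * m i) + (if i = e then s * m e else 0)" for i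
        unfolding g_def by (simp add: algebra_simps)
      then have "(\<Sum>i\<in>A. g i * m i) = (\<Sum>i\<in>A. (t - 1 - r) * (neg i * m i) + r * (pos i * m i) + (if i = e then s * m e else 0))"
        by simp
      also have "\<dots> = (t - 1 - r) * Q + r * P + s * m e"
        unfolding P_def Q_def using A e(1) by (simp add: sum.distrib sum_distrib_left)
      finally show ?thesis .
    qed
    also have "\<dots> = (t - 1 - r) * Q + r * Q + r * q + s * t * q" unfolding PQ t by (simp add: algebra_simps)
    also have "\<dots> = (t - 1) * Q + (r + s * t) * q" proof -
      have "t - 1 - r + r = t - 1" using rt by simp
      then have "(t - 1 - r) * Q + r * Q = (t - 1) * Q" by (metis add_mult_distrib)
      then show ?thesis by (simp add: algebra_simps)
    qed
    also have "r + s * t = n - N0" unfolding r_def s_def by simp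
    also have "(t - 1) * Q + (n - N0) * q = (N0 + (n - N0)) * q" unfolding u N0_def
      by (simp add: algebra_simps)
    also have "\<dots> = n * q" using n by simp
    finally show "(\<Sum>i\<in>A. g i * m i) = n * q" .
  qed
qed

lemma sum_plus_delta:
  fixes f :: "nat \<Rightarrow> 'a::comm_monoid_add"
  assumes "finite A" "b \<in> A"
  shows "(\<Sum>i\<in>A. f i + (if i = b then c else 0)) = (\<Sum>i\<in>A. f i) + c"
  using assms by (simp add: sum.distrib)

theorem lemma4p7:
  fixes k q :: nat and m :: "nat \<Rightarrow> nat" and \<chi> :: "nat \<Rightarrow> bit"
  assumes m_pos: "\<forall>i\<in>{1..k}. m i \<ge> 1"
    and q_def: "q = Gcd (m ` {1..k})"
    and cond: "(\<exists>i\<in>{1..k}. \<exists>j\<in>{1..k}. even (m i) \<and> \<chi> i \<noteq> 0 \<and> odd (m j))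
             \<or> (\<exists>i\<in>{1..k}. \<exists>j\<in>{1..k}. odd (m i) \<and> \<chi> i = 0 \<and> \<chi> j \<noteq> 0)"
  shows "\<exists>N::nat. N \<ge> 1 \<and> (\<forall>n\<ge>N. \<forall>c::bit. \<exists>l::nat \<Rightarrow> nat.
           (\<forall>i\<in>{1..k}. l i \<ge> 1) \<and>
           (\<Sum>i=1..k. l i * m i) = n * q \<and>
           (\<Sum>i=1..k. of_nat (l i) * \<chi> i) = c)"
proof -
  define A where "A = {1..k}"
  obtain a b where ab: "a \<in> A" "b \<in> A" "odd (m b)" "\<chi> a = 1" "even (m a) \<or> \<chi> b = 0"
  proof -
    from cond show ?thesis
    proof
      assume "\<exists>i\<in>{1..k}. \<exists>j\<in>{1..k}. even (m i) \<and> \<chi> i \<noteq> 0 \<and> odd (m j)"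
      then obtain i j where "i \<in> A" "j \<in> A" "even (m i)" "\<chi> i = 1" "odd (m j)"
        unfolding A_def using bit_not_zero_iff by blast
      then show ?thesis using that[of i j] by blast
    next
      assume "\<exists>i\<in>{1..k}. \<exists>j\<in>{1..k}. odd (m i) \<and> \<chi> i = 0 \<and> \<chi> j \<noteq> 0"
      then obtain i j where "i \<in> A" "j \<in> A" "odd (m i)" "\<chi> i = 0" "\<chi> j = 1"
        unfolding A_def using bit_not_zero_iff by blast
      then show ?thesis using that[of j i] by blast
    qed
  qed
  have fA: "finite A" unfolding A_def by simp
  obtain N0 where N0: "\<forall>n\<ge>N0. \<exists>g::nat\<Rightarrow>nat. (\<Sum>i\<in>A. g i * m i) = n * q"
    using core[OF fA ab(1), of m] m_pos ab(1) unfolding A_def q_def by auto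
  define C where "C = (\<Sum>i\<in>A. m i) + m a * m b"
  have qd: "q dvd m i" if "i \<in> A" for i unfolding q_def A_def using that A_def by simp
  have "q dvd C" unfolding C_def using ab(1) by (intro dvd_add dvd_sum dvd_mult2) (auto simp: qd)
  then obtain \<gamma> where \<gamma>: "C = \<gamma> * q" by (metis dvd_def mult.commute)
  show ?thesis
  proof (intro exI[of _ "max 1 (N0 + \<gamma>)"] conjI allI impI)
    fix n c assume n: "n \<ge> max 1 (N0 + \<gamma>)"
    have "n - \<gamma> \<ge> N0" using n by linarith
    then obtain g where g: "(\<Sum>i\<in>A. g i * m i) = (n - \<gamma>) * q" using N0 by blast
    define l0 where "l0 i = 1 + (if i = b then m a else 0) + g i" for i
    define l1 where "l1 i = 1 + (if i = a then m b else 0) + g i" for i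
    define X where "X = (\<Sum>i\<in>A. of_nat (1 + g i) * \<chi> i :: bit)"
    have s0: "(\<Sum>i\<in>A. l0 i * m i) = n * q"
    proof -
      have "(\<Sum>i\<in>A. l0 i * m i) = (\<Sum>i\<in>A. m i + (if i = b then m a * m b else 0) + g i * m i)"
        unfolding l0_def by (intro sum.cong) (auto simp: algebra_simps)
      also have "\<dots> = C + (n - \<gamma>) * q" unfolding C_def using fA ab(2) g by (simp add: sum.distrib)
      also have "\<dots> = n * q" using n \<gamma> by (simp flip: add_mult_distrib)
      finally show ?thesis .
    qed
    have s1: "(\<Sum>i\<in>A. l1 i * m i) = n * q"
    proof -
      have "(\<Sum>i\<in>A. l1 i * m i) = (\<Sum>i\<in>A. m i + (if i = a then m a * m b else 0) + g i * m i)"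
        unfolding l1_def by (intro sum.cong) (auto simp: algebra_simps)
      also have "\<dots> = C + (n - \<gamma>) * q" unfolding C_def using fA ab(1) g by (simp add: sum.distrib)
      also have "\<dots> = n * q" using n \<gamma> by (simp flip: add_mult_distrib)
      finally show ?thesis .
    qed
    have p0: "(\<Sum>i\<in>A. of_nat (l0 i) * \<chi> i) = X"
    proof -
      have "(\<Sum>i\<in>A. of_nat (l0 i) * \<chi> i) = (\<Sum>i\<in>A. of_nat (1 + g i) * \<chi> i + (if i = b then of_nat (m a) * \<chi> b else 0))"
        unfolding l0_def by (intro sum.cong) (auto simp: algebra_simps)
      also have "\<dots> = X + of_nat (m a) * \<chi> b" unfolding X_def using fA ab(2) by (rule sum_plus_delta)
      also have "of_nat (m a) * \<chi> b = 0" using ab(5) by (auto simp: bit_of_nat)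
      finally show ?thesis by simp
    qed
    have p1: "(\<Sum>i\<in>A. of_nat (l1 i) * \<chi> i) = X + 1"
    proof -
      have "(\<Sum>i\<in>A. of_nat (l1 i) * \<chi> i) = (\<Sum>i\<in>A. of_nat (1 + g i) * \<chi> i + (if i = a then of_nat (m b) * \<chi> a else 0))"
        unfolding l1_def by (intro sum.cong) (auto simp: algebra_simps)
      also have "\<dots> = X + of_nat (m b) * \<chi> a" unfolding X_def using fA ab(1) by (rule sum_plus_delta)
      also have "of_nat (m b) * \<chi> a = 1" using ab(3,4) by (auto simp: bit_of_nat)
      finally show ?thesis by simp
    qed
    have two: "x = 0 \<or> x = 1" for x :: bit using bit_not_zero_iff by blast
    have "c = X \<or> c = X + 1" using two[of c] two[of X] by auto
    then show "\<exists>l::nat \<Rightarrow> nat. (\<forall>i\<in>{1..k}. l i \<ge> 1) \<and>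
           (\<Sum>i=1..k. l i * m i) = n * q \<and> (\<Sum>i=1..k. of_nat (l i) * \<chi> i) = c"
    proof
      assume "c = X" then show ?thesis using s0 p0 unfolding A_def by (intro exI[of _ l0]) (auto simp: l0_def)
    next
      assume "c = X + 1" then show ?thesis using s1 p1 unfolding A_def by (intro exI[of _ l1]) (auto simp: l1_def)
    qed
  qed simp
qed

end
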